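(* Let $M=H/\Gamma$ be a three-dimensional Heisenberg manifold ($H$ the classical Heisenberg group of real upper unitriangular $3\times3$ matrices, $\Gamma\subset H$ a lattice), and let $\mu$ be the $H$-invariant probability measure on $M$. Then $\mu\times\mu$-almost all pairs of points of $M$ are not blockable.
   Context: Connecting curves for $m_1,m_2\in M$: $c(t)=\exp(tx)\cdot m_1$, $0\le t\le1$, $x$ in the Lie algebra of $H$, with $c(0)=m_1,c(1)=m_2$. The pair is blockable if there is a finite $B\subset M\setminus\{m_1,m_2\}$ with $c([0,1])\cap B\ne\emptyset$ for every connecting curve $c$. *)

theory Defs
  imports "HOL-Probability.Probability"
begin

text \<open>The point (x,y,z) stands for the matrix [[1,x,z],[0,1,y],[0,0,1]];
  matrix multiplication becomes the group law below.\<close>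

type_synonym heis = "real \<times> real \<times> real"

definition hmult :: "heis \<Rightarrow> heis \<Rightarrow> heis" where
  "hmult p q = (case p of (x, y, z) \<Rightarrow> case q of (x', y', z') \<Rightarrow>
      (x + x', y + y', z + z' + x * y'))"

definition hinv :: "heis \<Rightarrow> heis" where
  "hinv p = (case p of (x, y, z) \<Rightarrow> (- x, - y, x * y - z))"

definition hone :: heis where "hone = (0, 0, 0)"

text \<open>Lie algebra of H: strictly upper triangular matrices [[0,a,c],[0,0,b],[0,0,0]],
  encoded as (a,b,c).  Since X^3 = 0, exp X = I + X + X^2/2, which is the matrix
  [[1,a,c + a*b/2],[0,1,b],[0,0,1]].\<close>

definition hexp :: "real \<times> real \<times> real \<Rightarrow> heis" where
  "hexp X = (case X of (a, b, c) \<Rightarrow> (a, b, c + a * b / 2))"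

text \<open>Lattices: discrete subgroups of finite covolume, i.e. admitting a measurable
  fundamental domain of finite Haar measure (Haar measure on H is Lebesgue measure in
  these coordinates).\<close>

definition heis_subgroup :: "heis set \<Rightarrow> bool" where
  "heis_subgroup \<Gamma> \<longleftrightarrow> hone \<in> \<Gamma> \<and> (\<forall>g\<in>\<Gamma>. \<forall>h\<in>\<Gamma>. hmult g h \<in> \<Gamma>) \<and> (\<forall>g\<in>\<Gamma>. hinv g \<in> \<Gamma>)"

definition heis_discrete :: "heis set \<Rightarrow> bool" where
  "heis_discrete \<Gamma> \<longleftrightarrow> (\<forall>g\<in>\<Gamma>. \<exists>e>0. \<forall>h\<in>\<Gamma>. dist h g < e \<longrightarrow> h = g)"

definition heis_lattice :: "heis set \<Rightarrow> bool" where
  "heis_lattice \<Gamma> \<longleftrightarrow> heis_subgroup \<Gamma> \<and> heis_discrete \<Gamma> \<and>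
     (\<exists>F. F \<in> sets lborel \<and> emeasure lborel F < \<infinity> \<and>
          (\<forall>h. \<exists>!\<gamma>. \<gamma> \<in> \<Gamma> \<and> hmult h \<gamma> \<in> F))"

definition coset :: "heis set \<Rightarrow> heis \<Rightarrow> heis set" where
  "coset \<Gamma> h = (\<lambda>\<gamma>. hmult h \<gamma>) ` \<Gamma>"

definition hmanifold :: "heis set \<Rightarrow> heis set set" where
  "hmanifold \<Gamma> = range (coset \<Gamma>)"

definition hmanifold_sets :: "heis set \<Rightarrow> heis set set set" where
  "hmanifold_sets \<Gamma> = {A. A \<subseteq> hmanifold \<Gamma> \<and> {h. coset \<Gamma> h \<in> A} \<in> sets borel}"

definition hact :: "heis \<Rightarrow> heis set \<Rightarrow> heis set" where
  "hact g m = (\<lambda>h. hmult g h) ` m"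

definition hcurve :: "real \<times> real \<times> real \<Rightarrow> heis set \<Rightarrow> real \<Rightarrow> heis set" where
  "hcurve X m t = hact (hexp (t *\<^sub>R X)) m"

definition blockable :: "heis set \<Rightarrow> heis set \<Rightarrow> heis set \<Rightarrow> bool" where
  "blockable \<Gamma> m1 m2 \<longleftrightarrow>
     (\<exists>B. finite B \<and> B \<subseteq> hmanifold \<Gamma> - {m1, m2} \<and>
        (\<forall>X. hcurve X m1 1 = m2 \<longrightarrow> (\<exists>t\<in>{0..1}. hcurve X m1 t \<in> B)))"

end

theory Submission
  imports Defs
begin


lemma hmult_simp[simp]: "hmult (a,b,c) (d,e,f) = (a+d, b+e, c+f+a*e)"
  by (simp add: hmult_def)
lemma hinv_simp[simp]: "hinv (a,b,c) = (-a,-b,a*b-c)"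
  by (simp add: hinv_def)
lemma hexp_simp[simp]: "hexp (a,b,c) = (a,b,c+a*b/2)"
  by (simp add: hexp_def)

definition hlog :: "heis \<Rightarrow> real \<times> real \<times> real" where
  "hlog p = (case p of (x,y,z) \<Rightarrow> (x,y,z - x*y/2))"
lemma hlog_simp[simp]: "hlog (a,b,c) = (a,b,c-a*b/2)"
  by (simp add: hlog_def)

lemma hexp_hlog[simp]: "hexp (hlog p) = p"
  by (cases p) auto
lemma hmult_assoc: "hmult (hmult a b) c = hmult a (hmult b c)"
  by (cases a; cases b; cases c) (auto simp: algebra_simps)
lemma hmult_hone[simp]: "hmult hone a = a" "hmult a hone = a"
  by (cases a; simp add: hone_def)+
lemma hmult_hinv[simp]: "hmult (hinv a) a = hone" "hmult a (hinv a) = hone"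
  by (cases a; simp add: hone_def algebra_simps)+
lemma hmult_hinv2[simp]: "hmult (hinv a) (hmult a b) = b" "hmult a (hmult (hinv a) b) = b"
  by (metis hmult_assoc hmult_hinv hmult_hone)+
lemma hexp_zero[simp]: "hexp (0 *\<^sub>R X) = hone"
  by (cases X) (simp add: hone_def)
lemma hexp_0[simp]: "hexp 0 = hone"
  by (simp add: hone_def zero_prod_def)
lemma hexp_one[simp]: "hexp (1 *\<^sub>R X) = hexp X" by simp

lemma hexp_conj: "hexp (t *\<^sub>R hlog (hmult (hmult h w) (hinv h))) = hmult (hmult h (hexp (t *\<^sub>R hlog w))) (hinv h)"
  by (cases h; cases w) (auto simp: algebra_simps field_simps)

lemma hinv_hmult: "hinv (hmult a b) = hmult (hinv b) (hinv a)"
  by (cases a; cases b) (auto simp: algebra_simps)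
lemma hinv_hinv[simp]: "hinv (hinv a) = a"
  by (cases a) auto

lemma hmult_alt: "hmult p q = (fst p + fst q, fst (snd p) + fst (snd q), snd (snd p) + snd (snd q) + fst p * fst (snd q))"
  by (cases p; cases q) auto
lemma hinv_alt: "hinv p = (- fst p, - fst (snd p), fst p * fst (snd p) - snd (snd p))"
  by (cases p) auto

lemma dfst[derivative_intros]: "fst differentiable F" "snd differentiable F"
  by (auto intro: bounded_linear_imp_differentiable bounded_linear_fst bounded_linear_snd)

lemma cont_hmult: "continuous_on UNIV (\<lambda>p::heis\<times>heis. hmult (fst p) (snd p))"
  unfolding hmult_alt by (intro continuous_intros)
lemma cont_hmult1: "continuous_on UNIV (\<lambda>p::heis. hmult p a)" "continuous_on UNIV (\<lambda>p::heis. hmult a p)"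
  unfolding hmult_alt by (intro continuous_intros)+
lemma cont_hinv: "continuous_on UNIV hinv"
  unfolding hinv_alt[abs_def] by (intro continuous_intros)
lemma dfst2[derivative_intros]: "(\<lambda>u::heis. fst (snd u)) differentiable F" "(\<lambda>u::heis. snd (snd u)) differentiable F"
  by (auto intro!: bounded_linear_imp_differentiable bounded_linear_compose[OF bounded_linear_fst bounded_linear_snd]
     bounded_linear_compose[OF bounded_linear_snd bounded_linear_snd])
lemma diff1: "(\<lambda>a. hmult h0 (hinv a)) differentiable_on S"
  unfolding hmult_alt hinv_alt differentiable_on_def by (auto intro!: derivative_intros)
lemma diff2: "(\<lambda>a. hmult (hmult h1 a) c) differentiable_on S"
  unfolding hmult_alt differentiable_on_def by (auto intro!: derivative_intros)


lemma sg: assumes "heis_subgroup \<Gamma>"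
  shows "hone \<in> \<Gamma>" "\<And>g h. g\<in>\<Gamma> \<Longrightarrow> h\<in>\<Gamma> \<Longrightarrow> hmult g h \<in> \<Gamma>" "\<And>g. g\<in>\<Gamma> \<Longrightarrow> hinv g \<in> \<Gamma>"
  using assms by (auto simp: heis_subgroup_def)

lemma coset_mem: "heis_subgroup \<Gamma> \<Longrightarrow> h \<in> coset \<Gamma> h"
  unfolding coset_def using sg(1)[of \<Gamma>] by (metis hmult_hone(2) image_eqI)

lemma coset_right: assumes "heis_subgroup \<Gamma>" "\<gamma> \<in> \<Gamma>"
  shows "coset \<Gamma> (hmult h \<gamma>) = coset \<Gamma> h"
proof
  show "coset \<Gamma> (hmult h \<gamma>) \<subseteq> coset \<Gamma> h"
  proof
    fix x assume "x \<in> coset \<Gamma> (hmult h \<gamma>)"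
    then obtain \<delta> where d: "\<delta>\<in>\<Gamma>" "x = hmult (hmult h \<gamma>) \<delta>" by (auto simp: coset_def)
    have "x = hmult h (hmult \<gamma> \<delta>)" using d by (simp add: hmult_assoc)
    moreover have "hmult \<gamma> \<delta> \<in> \<Gamma>" using sg[OF assms(1)] assms(2) d by auto
    ultimately show "x \<in> coset \<Gamma> h" unfolding coset_def by blast
  qed
  show "coset \<Gamma> h \<subseteq> coset \<Gamma> (hmult h \<gamma>)"
  proof
    fix x assume "x \<in> coset \<Gamma> h"
    then obtain \<delta> where d: "\<delta>\<in>\<Gamma>" "x = hmult h \<delta>" by (auto simp: coset_def)
    have "x = hmult (hmult h \<gamma>) (hmult (hinv \<gamma>) \<delta>)" using d by (simp add: hmult_assoc)
    moreover have "hmult (hinv \<gamma>) \<delta> \<in> \<Gamma>" using sg[OF assms(1)] assms(2) d by auto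
    ultimately show "x \<in> coset \<Gamma> (hmult h \<gamma>)" by (auto simp: coset_def)
  qed
qed

lemma coset_eqD: assumes "heis_subgroup \<Gamma>" "coset \<Gamma> a = coset \<Gamma> b"
  shows "\<exists>\<delta>\<in>\<Gamma>. a = hmult b \<delta>"
  using coset_mem[OF assms(1), of a] assms(2) by (auto simp: coset_def)

lemma coset_eq_iff: assumes "heis_subgroup \<Gamma>"
  shows "coset \<Gamma> a = coset \<Gamma> b \<longleftrightarrow> (\<exists>\<delta>\<in>\<Gamma>. a = hmult b \<delta>)"
  using coset_eqD[OF assms] coset_right[OF assms] by metis

lemma hact_coset: "hact g (coset \<Gamma> h) = coset \<Gamma> (hmult g h)"
  unfolding hact_def coset_def by (auto simp: hmult_assoc image_image)

definition cl :: "heis \<Rightarrow> real \<times> real" where "cl p = (fst p, fst (snd p))"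

definition Gbad :: "heis set \<Rightarrow> heis set" where
  "Gbad \<Gamma> = {g. \<exists>\<gamma>\<in>\<Gamma>. \<exists>\<gamma>'\<in>\<Gamma>. \<exists>\<delta>\<in>\<Gamma>. cl \<gamma> \<noteq> cl \<gamma>' \<and>
      (\<exists>s\<in>{0<..<1}. \<exists>t\<in>{0<..<1}. hexp (s *\<^sub>R hlog (hmult g \<gamma>)) = hmult (hexp (t *\<^sub>R hlog (hmult g \<gamma>'))) \<delta>)}"

lemma nonblock:
  assumes G: "heis_subgroup \<Gamma>" and inf: "infinite (cl ` \<Gamma>)"
    and good: "hmult (hinv h) k \<notin> Gbad \<Gamma>"
  shows "\<not> blockable \<Gamma> (coset \<Gamma> h) (coset \<Gamma> k)"
proof
  assume "blockable \<Gamma> (coset \<Gamma> h) (coset \<Gamma> k)"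
  then obtain B where B: "finite B" "B \<subseteq> hmanifold \<Gamma> - {coset \<Gamma> h, coset \<Gamma> k}"
    and hit: "\<And>X. hcurve X (coset \<Gamma> h) 1 = coset \<Gamma> k \<Longrightarrow> \<exists>t\<in>{0..1}. hcurve X (coset \<Gamma> h) t \<in> B"
    unfolding blockable_def by blast
  define g where "g = hmult (hinv h) k"
  define E where "E \<gamma> t = hexp (t *\<^sub>R hlog (hmult g \<gamma>))" for \<gamma> t
  have curve: "hcurve (hlog (hmult (hmult k \<gamma>) (hinv h))) (coset \<Gamma> h) t = coset \<Gamma> (hmult h (E \<gamma> t))" for \<gamma> t
  proof -
    have "hmult (hmult k \<gamma>) (hinv h) = hmult (hmult h (hmult g \<gamma>)) (hinv h)"
      by (simp add: g_def hmult_assoc)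
    then have "hexp (t *\<^sub>R hlog (hmult (hmult k \<gamma>) (hinv h))) = hmult (hmult h (E \<gamma> t)) (hinv h)"
      by (simp only: hexp_conj E_def)
    then have "hmult (hexp (t *\<^sub>R hlog (hmult (hmult k \<gamma>) (hinv h)))) h = hmult h (E \<gamma> t)"
      by (simp add: hmult_assoc)
    then show ?thesis
      unfolding hcurve_def hact_coset by simp
  qed
  have "\<exists>t\<in>{0<..<1}. coset \<Gamma> (hmult h (E \<gamma> t)) \<in> B" if "\<gamma>\<in>\<Gamma>" for \<gamma>
  proof -
    have e1: "E \<gamma> 1 = hmult g \<gamma>" by (simp add: E_def)
    have e0: "E \<gamma> 0 = hone" by (simp add: E_def)
    have "coset \<Gamma> (hmult h (E \<gamma> 1)) = coset \<Gamma> k"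
      using coset_right[OF G that] by (simp add: e1 g_def flip: hmult_assoc)
    then obtain t where t: "t\<in>{0..1}" "coset \<Gamma> (hmult h (E \<gamma> t)) \<in> B"
      using hit curve by metis
    have "t \<noteq> 0" using t B(2) e0 by auto
    moreover have "t \<noteq> 1" using t B(2) \<open>coset \<Gamma> (hmult h (E \<gamma> 1)) = coset \<Gamma> k\<close> by auto
    ultimately show ?thesis using t by auto
  qed
  then obtain T where T: "\<And>\<gamma>. \<gamma>\<in>\<Gamma> \<Longrightarrow> T \<gamma> \<in> {0<..<1} \<and> coset \<Gamma> (hmult h (E \<gamma> (T \<gamma>))) \<in> B"
    by metis
  define f where "f \<gamma> = coset \<Gamma> (hmult h (E \<gamma> (T \<gamma>)))" for \<gamma>
  have inj: "cl \<gamma> = cl \<gamma>'" if g1: "\<gamma>\<in>\<Gamma>" and g2: "\<gamma>'\<in>\<Gamma>" and fe: "f \<gamma> = f \<gamma>'" for \<gamma> \<gamma>'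
  proof (rule ccontr)
    assume ne: "cl \<gamma> \<noteq> cl \<gamma>'"
    obtain \<delta> where d: "\<delta>\<in>\<Gamma>" "hmult h (E \<gamma> (T \<gamma>)) = hmult (hmult h (E \<gamma>' (T \<gamma>'))) \<delta>"
      using coset_eqD[OF G fe[unfolded f_def]] by blast
    then have "E \<gamma> (T \<gamma>) = hmult (E \<gamma>' (T \<gamma>')) \<delta>"
      by (metis hmult_assoc hmult_hinv2(1))
    then have "g \<in> Gbad \<Gamma>" unfolding Gbad_def E_def using g1 g2 d(1) ne T[OF g1] T[OF g2] by blast
    then show False using good g_def by simp
  qed
  have "cl ` \<Gamma> \<subseteq> (\<lambda>b. cl (SOME \<gamma>. \<gamma>\<in>\<Gamma> \<and> f \<gamma> = b)) ` B"
  proof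
    fix c assume "c \<in> cl ` \<Gamma>"
    then obtain \<gamma> where g: "\<gamma>\<in>\<Gamma>" "c = cl \<gamma>" by auto
    let ?\<gamma> = "SOME \<gamma>'. \<gamma>'\<in>\<Gamma> \<and> f \<gamma>' = f \<gamma>"
    have "?\<gamma> \<in> \<Gamma> \<and> f ?\<gamma> = f \<gamma>" by (rule someI_ex) (use g in blast)
    then have "cl ?\<gamma> = c" using inj g by metis
    moreover have "f \<gamma> \<in> B" using T g f_def by auto
    ultimately show "c \<in> (\<lambda>b. cl (SOME \<gamma>. \<gamma>\<in>\<Gamma> \<and> f \<gamma> = b)) ` B" by force
  qed
  then show False using inf B(1) finite_subset by blast
qed




lemma piece_negl:
  fixes p q r p' q' r' d1 d2 d3 :: real
  assumes ne: "(p,q) \<noteq> (p',q')"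
  shows "negligible {g. \<exists>s\<in>{0<..<1}. \<exists>t\<in>{0<..<1}. hexp (s *\<^sub>R hlog (hmult g (p,q,r))) = hmult (hexp (t *\<^sub>R hlog (hmult g (p',q',r')))) (d1,d2,d3)}"
    (is "negligible ?S")
proof -
  define L where "L s x y = s*(r + x*q - (x+p)*(y+q)/2) + s^2*(x+p)*(y+q)/2" for s x y :: real
  define R where "R t x y = t*(r' + x*q' - (x+p')*(y+q')/2) + t^2*(x+p')*(y+q')/2 + d3 + t*(x+p')*d2" for t x y :: real
  define X where "X s t = (d1 + t*p' - s*p)/(s-t)" for s t :: real
  define Y where "Y s t = (d2 + t*q' - s*q)/(s-t)" for s t :: real
  define \<Phi> where "\<Phi> u = (X (fst u) (snd u), Y (fst u) (snd u),
      (R (snd u) (X (fst u) (snd u)) (Y (fst u) (snd u)) - L (fst u) (X (fst u) (snd u)) (Y (fst u) (snd u))) / (fst u - snd u))" for u :: "real \<times> real"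
  define s0 where "s0 = (if p \<noteq> p' then d1/(p-p') else d2/(q-q'))"
  define a where "a = ((q-q')*(s0 - s0^2)/2, (s0^2-s0)*(p-p')/2, 0::real)"
  define c where "c = -(s0*(r-r') + (s0^2-s0)*(p*q-p'*q')/2 - d3 - s0*p'*d2)"
  have sub: "?S \<subseteq> \<Phi> ` {u. fst u \<noteq> snd u} \<union> (if s0 \<in> {0<..<1} then {g. a \<bullet> g = c} else {})"
  proof
    fix g assume "g \<in> ?S"
    then obtain s t where st: "s\<in>{0<..<1}" "t\<in>{0<..<1}"
      and eq: "hexp (s *\<^sub>R hlog (hmult g (p,q,r))) = hmult (hexp (t *\<^sub>R hlog (hmult g (p',q',r')))) (d1,d2,d3)"
      by blast
    obtain x y z where g: "g = (x,y,z)" by (cases g)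
    let ?l = "hexp (s *\<^sub>R hlog (hmult g (p,q,r)))" and ?r = "hmult (hexp (t *\<^sub>R hlog (hmult g (p',q',r')))) (d1,d2,d3)"
    have "fst ?l = fst ?r" using eq by simp
    then have e1: "s*(x+p) = t*(x+p') + d1" by (simp add: g algebra_simps)
    have "fst (snd ?l) = fst (snd ?r)" using eq by simp
    then have e2: "s*(y+q) = t*(y+q') + d2" by (simp add: g algebra_simps)
    have "snd (snd ?l) = snd (snd ?r)" using eq by simp
    then have e3: "s*z + L s x y = t*z + R t x y" by (simp add: g L_def R_def algebra_simps power2_eq_square)
    show "g \<in> \<Phi> ` {u. fst u \<noteq> snd u} \<union> (if s0 \<in> {0<..<1} then {g. a \<bullet> g = c} else {})"
    proof (cases "s = t")
      case False
      have x: "x = X s t" using e1 False by (simp add: X_def field_simps)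
      have y: "y = Y s t" using e2 False by (simp add: Y_def field_simps)
      have "z = (R t x y - L s x y) / (s - t)" using e3 False by (simp add: field_simps)
      then have "g = \<Phi> (s,t)" using x y g by (simp add: \<Phi>_def)
      then show ?thesis using False by auto
    next
      case True
      have s: "s = s0"
      proof (cases "p = p'")
        case False then show ?thesis using e1 True by (simp add: s0_def field_simps)
      next
        case True
        then have "q \<noteq> q'" using ne by auto
        then show ?thesis using e2 \<open>s = t\<close> True by (simp add: s0_def field_simps)
      qed
      have d2: "d2 = s*(q-q')" using e2 True by (simp add: algebra_simps)
      have "a \<bullet> g = c" using e3 d2 True unfolding a_def c_def g s[symmetric] L_def R_def
        by (simp add: inner_prod_def algebra_simps power2_eq_square) algebra
      then show ?thesis using st s by auto
    qed
  qed
  have n1: "negligible (\<Phi> ` {u. fst u \<noteq> snd u})"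
  proof (rule negligible_differentiable_image_lowdim)
    show "DIM(real \<times> real) < DIM(real \<times> real \<times> real)" by simp
    show "\<Phi> differentiable_on {u. fst u \<noteq> snd u}"
      unfolding differentiable_on_def \<Phi>_def X_def Y_def R_def L_def
      by (auto intro!: derivative_intros)
  qed
  have n2: "negligible (if s0 \<in> {0<..<1} then {g. a \<bullet> g = c} else {})"
  proof (cases "s0 \<in> {0<..<1}")
    case True
    then have "s0 - s0^2 > 0" by (simp add: power2_eq_square)
    then have "a \<noteq> 0" using ne by (auto simp: a_def zero_prod_def)
    then show ?thesis using True negligible_hyperplane by auto
  qed auto
  show ?thesis using negligible_subset[OF negligible_Un[OF n1 n2] sub] .
qed



lemma K_measure: "emeasure lborel (cbox 0 One :: heis set) = 1"
  by (simp add: emeasure_lborel_cbox_eq Basis_prod_def inner_prod_def prod.union_disjoint)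

lemma meas_phi: "(\<lambda>x::'a \<times> heis. hmult (hinv (snd x)) (sec (fst x))) \<in> borel_measurable (M \<Otimes>\<^sub>M lborel)"
  if "sec \<in> borel_measurable M"
proof -
  have m1: "(\<lambda>p::heis\<times>heis. hmult (fst p) (snd p)) \<in> borel_measurable (borel \<Otimes>\<^sub>M borel)"
    unfolding borel_prod by (rule borel_measurable_continuous_onI[OF cont_hmult])
  have m2: "hinv \<in> borel_measurable borel" by (rule borel_measurable_continuous_onI[OF cont_hinv])
  have "(\<lambda>x::'a \<times> heis. (hinv (snd x), sec (fst x))) \<in> measurable (M \<Otimes>\<^sub>M lborel) (borel \<Otimes>\<^sub>M borel)"
    using that m2 by measurable
  from measurable_comp[OF this m1] show ?thesis by (simp add: o_def)
qed

lemma borel_negl_null: "N \<in> sets borel \<Longrightarrow> negligible N \<Longrightarrow> N \<in> null_sets lborel"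
  by (simp add: negligible_iff_null_sets null_sets_completion_iff)

lemma abs_cont:
  assumes G: "heis_subgroup \<Gamma>" and P: "prob_space \<mu>" and sp: "space \<mu> = hmanifold \<Gamma>"
    and st: "sets \<mu> = hmanifold_sets \<Gamma>"
    and inv: "\<forall>g. \<forall>A\<in>sets \<mu>. emeasure \<mu> (hact g ` A) = emeasure \<mu> A"
    and sec: "sec \<in> borel_measurable \<mu>" and secp: "\<And>m. m \<in> space \<mu> \<Longrightarrow> coset \<Gamma> (sec m) = m"
    and A: "A \<in> sets \<mu>" and neg: "negligible {h. coset \<Gamma> h \<in> A}"
  shows "emeasure \<mu> A = 0"
proof -
  interpret prob_space \<mu> by fact
  interpret L: sigma_finite_measure lborel by (rule sigma_finite_lborel)
  interpret pair_sigma_finite \<mu> lborel ..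
  define At where "At = {h. coset \<Gamma> h \<in> A}"
  have At_borel: "At \<in> sets borel" using A st by (simp add: hmanifold_sets_def At_def)
  define \<phi> where "\<phi> x = hmult (hinv (snd x)) (sec (fst x))" for x :: "heis set \<times> heis"
  have phim: "\<phi> \<in> borel_measurable (\<mu> \<Otimes>\<^sub>M lborel)" unfolding \<phi>_def by (rule meas_phi[OF sec])
  have Asub: "A \<subseteq> hmanifold \<Gamma>" using A st by (simp add: hmanifold_sets_def)
  have step1: "hact g ` A = {m \<in> space \<mu>. \<phi> (m,g) \<in> At}" for g
  proof
    show "hact g ` A \<subseteq> {m \<in> space \<mu>. \<phi> (m,g) \<in> At}"
    proof
      fix m assume "m \<in> hact g ` A"
      then obtain a where a: "a \<in> A" "m = hact g a" by auto
      then obtain h where h: "a = coset \<Gamma> h" using Asub by (auto simp: hmanifold_def)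
      have m: "m = coset \<Gamma> (hmult g h)" using a h by (simp add: hact_coset)
      then have ms: "m \<in> space \<mu>" using sp by (simp add: hmanifold_def)
      have "coset \<Gamma> (\<phi> (m,g)) = hact (hinv g) (coset \<Gamma> (sec m))"
        by (simp add: \<phi>_def hact_coset)
      also have "\<dots> = a" using secp[OF ms] m h by (simp add: hact_coset flip: hmult_assoc)
      finally show "m \<in> {m \<in> space \<mu>. \<phi> (m,g) \<in> At}" using ms a by (simp add: At_def)
    qed
    show "{m \<in> space \<mu>. \<phi> (m,g) \<in> At} \<subseteq> hact g ` A"
    proof
      fix m assume m: "m \<in> {m \<in> space \<mu>. \<phi> (m,g) \<in> At}"
      have "hact g (coset \<Gamma> (\<phi> (m,g))) = m"
        using secp m by (simp add: \<phi>_def hact_coset)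
      moreover have "coset \<Gamma> (\<phi> (m,g)) \<in> A" using m by (simp add: At_def)
      ultimately show "m \<in> hact g ` A" by force
    qed
  qed
  have phig: "(\<lambda>m. \<phi> (m,g)) \<in> borel_measurable \<mu>" for g
  proof -
    have "(\<lambda>m. (m,g)) \<in> measurable \<mu> (\<mu> \<Otimes>\<^sub>M lborel)" by measurable
    from measurable_comp[OF this phim] show ?thesis by (simp add: o_def)
  qed
  have setm: "{m \<in> space \<mu>. \<phi> (m,g) \<in> At} \<in> sets \<mu>" for g
  proof -
    from phig[of g] show ?thesis using At_borel by (simp add: measurable_def vimage_def Int_def conj_commute)
  qed
  have eqA: "emeasure \<mu> A = (\<integral>\<^sup>+m. indicator At (\<phi> (m,g)) \<partial>\<mu>)" for g
  proof -
    have "emeasure \<mu> A = emeasure \<mu> {m \<in> space \<mu>. \<phi> (m,g) \<in> At}"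
      using inv A step1 by metis
    also have "\<dots> = (\<integral>\<^sup>+m. indicator {m \<in> space \<mu>. \<phi> (m,g) \<in> At} m \<partial>\<mu>)"
      using setm by simp
    also have "\<dots> = (\<integral>\<^sup>+m. indicator At (\<phi> (m,g)) \<partial>\<mu>)"
      by (intro nn_integral_cong) (auto simp: indicator_def)
    finally show ?thesis .
  qed
  define K :: "heis set" where "K = cbox 0 One"
  have Kb: "K \<in> sets lborel" by (simp add: K_def)
  define f :: "heis set \<times> heis \<Rightarrow> ennreal" where "f x = indicator K (snd x) * indicator At (\<phi> x)" for x
  have fm: "f \<in> borel_measurable (\<mu> \<Otimes>\<^sub>M lborel)"
    unfolding f_def using phim At_borel Kb by measurable
  have "emeasure \<mu> A = (\<integral>\<^sup>+g. indicator K g * emeasure \<mu> A \<partial>lborel)"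
    using Kb by (simp add: nn_integral_cmult_indicator K_def K_measure mult.commute)
  also have "\<dots> = (\<integral>\<^sup>+g. (\<integral>\<^sup>+m. f (m,g) \<partial>\<mu>) \<partial>lborel)"
  proof (intro nn_integral_cong)
    fix g
    have "indicator K g * emeasure \<mu> A = indicator K g * (\<integral>\<^sup>+m. indicator At (\<phi> (m,g)) \<partial>\<mu>)"
      by (simp add: eqA[of g])
    also have "\<dots> = (\<integral>\<^sup>+m. f (m,g) \<partial>\<mu>)"
      unfolding f_def snd_conv
      by (rule nn_integral_cmult[symmetric]) (use phig At_borel in auto)
    finally show "indicator K g * emeasure \<mu> A = (\<integral>\<^sup>+m. f (m,g) \<partial>\<mu>)" .
  qed
  also have "\<dots> = (\<integral>\<^sup>+m. (\<integral>\<^sup>+g. f (m,g) \<partial>lborel) \<partial>\<mu>)"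
    by (rule Fubini[OF fm])
  also have "\<dots> = (\<integral>\<^sup>+m. 0 \<partial>\<mu>)"
  proof (intro nn_integral_cong)
    fix m assume "m \<in> space \<mu>"
    define h0 where "h0 = sec m"
    define N where "N = {g. hmult (hinv g) h0 \<in> At}"
    have Nb: "N \<in> sets borel"
    proof -
      have "(\<lambda>g. hmult (hinv g) h0) \<in> borel_measurable borel"
        by (rule borel_measurable_continuous_onI)
          (rule continuous_on_compose2[OF cont_hmult1(1) cont_hinv], auto)
      then show ?thesis using At_borel by (simp add: N_def measurable_def vimage_def)
    qed
    have "N \<subseteq> (\<lambda>a. hmult h0 (hinv a)) ` At"
    proof
      fix g assume "g \<in> N"
      moreover have "g = hmult h0 (hinv (hmult (hinv g) h0))"
        by (simp add: hinv_hmult hmult_assoc)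
      ultimately show "g \<in> (\<lambda>a. hmult h0 (hinv a)) ` At" unfolding N_def by blast
    qed
    then have "negligible N"
      using negligible_subset negligible_differentiable_image_negligible[OF order_refl neg[folded At_def] diff1] by blast
    then have Nn: "N \<in> null_sets lborel" using Nb borel_negl_null by blast
    have "(\<integral>\<^sup>+g. f (m,g) \<partial>lborel) \<le> (\<integral>\<^sup>+g. indicator N g \<partial>lborel)"
      by (intro nn_integral_mono) (auto simp: f_def N_def \<phi>_def h0_def indicator_def)
    also have "\<dots> = 0" using Nn by (subst nn_integral_indicator) (auto simp: null_sets_def)
    finally show "(\<integral>\<^sup>+g. f (m,g) \<partial>lborel) = 0" by simp
  qed
  also have "\<dots> = 0" by simp
  finally show ?thesis .
qed



lemma discrete_countable:
  assumes "heis_discrete \<Gamma>" shows "countable \<Gamma>"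
proof -
  obtain e where e: "\<And>g. g\<in>\<Gamma> \<Longrightarrow> e g > 0 \<and> (\<forall>h\<in>\<Gamma>. dist h g < e g \<longrightarrow> h = g)"
    using assms unfolding heis_discrete_def by metis
  obtain D :: "heis set" where D: "countable D" "\<And>X. open X \<Longrightarrow> X \<noteq> {} \<Longrightarrow> \<exists>d\<in>D. d \<in> X"
    using countable_dense_setE by metis
  have "\<exists>n::nat. inverse (real (Suc n)) < e g / 2" if "g\<in>\<Gamma>" for g
    using e[OF that] by (intro reals_Archimedean) simp
  then obtain n where n: "\<And>g. g\<in>\<Gamma> \<Longrightarrow> inverse (real (Suc (n g))) < e g / 2" by metis
  have "\<exists>d\<in>D. d \<in> ball g (inverse (real (Suc (n g))))" for g
    by (intro D(2)) auto
  then obtain d where d: "\<And>g. d g \<in> D \<and> dist g (d g) < inverse (real (Suc (n g)))" by (metis mem_ball)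
  define f where "f g = (d g, n g)" for g
  have "inj_on f \<Gamma>"
  proof (rule inj_onI)
    fix g g' assume g: "g\<in>\<Gamma>" "g'\<in>\<Gamma>" "f g = f g'"
    then have dd: "d g = d g'" "n g = n g'" by (auto simp: f_def)
    have "dist g' g \<le> dist g' (d g') + dist g (d g)" using dd by (metis dist_commute dist_triangle)
    also have "\<dots> < e g" using d[of g] d[of g'] dd n[OF g(1)] by simp
    finally show "g = g'" using e[OF g(1)] g(2) by metis
  qed
  moreover have "countable (f ` \<Gamma>)"
    by (rule countable_subset[of _ "D \<times> UNIV"]) (auto simp: f_def d D(1))
  ultimately show ?thesis using countable_image_inj_on by blast
qed

lemma piece_negl':
  assumes "cl \<gamma> \<noteq> cl \<gamma>'"
  shows "negligible {g. \<exists>s\<in>{0<..<1}. \<exists>t\<in>{0<..<1}. hexp (s *\<^sub>R hlog (hmult g \<gamma>)) = hmult (hexp (t *\<^sub>R hlog (hmult g \<gamma>'))) \<delta>}"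
proof -
  obtain p q r where 1: "\<gamma> = (p,q,r)" by (cases \<gamma>)
  obtain p' q' r' where 2: "\<gamma>' = (p',q',r')" by (cases \<gamma>')
  obtain d1 d2 d3 where 3: "\<delta> = (d1,d2,d3)" by (cases \<delta>)
  show ?thesis using piece_negl[of p q p' q' r r' d1 d2 d3] assms by (simp add: 1 2 3 cl_def)
qed

lemma Gbad_negl:
  assumes "countable \<Gamma>" shows "negligible (Gbad \<Gamma>)"
proof -
  define P where "P x = (case x of (\<gamma>,\<gamma>',\<delta>) \<Rightarrow> if cl \<gamma> \<noteq> cl \<gamma>' then
     {g. \<exists>s\<in>{0<..<1}. \<exists>t\<in>{0<..<1}. hexp (s *\<^sub>R hlog (hmult g \<gamma>)) = hmult (hexp (t *\<^sub>R hlog (hmult g \<gamma>'))) \<delta>} else {})" for x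
  have "Gbad \<Gamma> \<subseteq> \<Union> (P ` (\<Gamma> \<times> \<Gamma> \<times> \<Gamma>))"
  proof
    fix g assume "g \<in> Gbad \<Gamma>"
    then obtain \<gamma> \<gamma>' \<delta> where "\<gamma>\<in>\<Gamma>" "\<gamma>'\<in>\<Gamma>" "\<delta>\<in>\<Gamma>" "cl \<gamma> \<noteq> cl \<gamma>'"
      "\<exists>s\<in>{0<..<1}. \<exists>t\<in>{0<..<1}. hexp (s *\<^sub>R hlog (hmult g \<gamma>)) = hmult (hexp (t *\<^sub>R hlog (hmult g \<gamma>'))) \<delta>"
      unfolding Gbad_def by blast
    then have 1: "g \<in> P (\<gamma>,\<gamma>',\<delta>)" by (simp add: P_def)
    have 2: "P (\<gamma>,\<gamma>',\<delta>) \<in> P ` (\<Gamma> \<times> \<Gamma> \<times> \<Gamma>)"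
      using \<open>\<gamma>\<in>\<Gamma>\<close> \<open>\<gamma>'\<in>\<Gamma>\<close> \<open>\<delta>\<in>\<Gamma>\<close> by (intro imageI) auto
    from 1 2
    show "g \<in> \<Union> (P ` (\<Gamma> \<times> \<Gamma> \<times> \<Gamma>))" by blast
  qed
  moreover have "negligible (\<Union> (P ` (\<Gamma> \<times> \<Gamma> \<times> \<Gamma>)))"
  proof (rule negligible_countable_Union)
    show "countable (P ` (\<Gamma> \<times> \<Gamma> \<times> \<Gamma>))" using assms by auto
    show "negligible S" if "S \<in> P ` (\<Gamma> \<times> \<Gamma> \<times> \<Gamma>)" for S
      using that piece_negl' by (auto simp: P_def)
  qed
  ultimately show ?thesis using negligible_subset by blast
qed



lemma borel_rmult_pre: "S \<in> sets borel \<Longrightarrow> (\<lambda>h. hmult h \<gamma>) -` S \<in> sets borel"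
  using borel_measurable_continuous_onI[OF cont_hmult1(1)[of \<gamma>]]
  by (simp add: measurable_def)

lemma section_exists:
  assumes G: "heis_subgroup \<Gamma>" and C: "countable \<Gamma>" and Fm: "F \<in> sets lborel"
    and uniq: "\<forall>h. \<exists>!\<gamma>. \<gamma> \<in> \<Gamma> \<and> hmult h \<gamma> \<in> F"
    and st: "sets \<mu> = hmanifold_sets \<Gamma>" and sp: "space \<mu> = hmanifold \<Gamma>"
  shows "\<exists>sec. sec \<in> borel_measurable \<mu> \<and> (\<forall>m\<in>space \<mu>. coset \<Gamma> (sec m) = m)"
proof -
  define gam where "gam h = (THE \<gamma>. \<gamma> \<in> \<Gamma> \<and> hmult h \<gamma> \<in> F)" for h
  have gam: "gam h \<in> \<Gamma> \<and> hmult h (gam h) \<in> F" for h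
    unfolding gam_def by (rule theI') (rule uniq[rule_format])
  have gam_u: "\<gamma> = gam h" if "\<gamma> \<in> \<Gamma>" "hmult h \<gamma> \<in> F" for h \<gamma>
    using uniq gam that by metis
  define sec where "sec m = (THE x. x \<in> m \<inter> F)" for m
  have sec_coset: "sec (coset \<Gamma> h) = hmult h (gam h)" for h
    unfolding sec_def
  proof (rule the_equality)
    show "hmult h (gam h) \<in> coset \<Gamma> h \<inter> F" using gam[of h] by (auto simp: coset_def)
    fix x assume "x \<in> coset \<Gamma> h \<inter> F"
    then obtain \<gamma> where "\<gamma>\<in>\<Gamma>" "x = hmult h \<gamma>" "hmult h \<gamma> \<in> F" by (auto simp: coset_def)
    then show "x = hmult h (gam h)" using gam_u by metis
  qed
  have secp: "coset \<Gamma> (sec m) = m" if ms: "m \<in> space \<mu>" for m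
  proof -
    obtain h where "m = coset \<Gamma> h" using ms sp by (auto simp: hmanifold_def)
    then show ?thesis using sec_coset coset_right[OF G] gam by metis
  qed
  have "sec \<in> borel_measurable \<mu>"
  proof (rule measurableI)
    fix E :: "heis set" assume E: "E \<in> sets borel"
    have eq: "{h. coset \<Gamma> h \<in> sec -` E \<inter> space \<mu>} = (\<Union>\<gamma>\<in>\<Gamma>. (\<lambda>h. hmult h \<gamma>) -` (F \<inter> E))"
    proof (intro set_eqI)
      fix h
      have cs: "coset \<Gamma> h \<in> space \<mu>" using sp by (simp add: hmanifold_def)
      have "(\<exists>\<gamma>\<in>\<Gamma>. hmult h \<gamma> \<in> F \<and> hmult h \<gamma> \<in> E) \<longleftrightarrow> hmult h (gam h) \<in> E"
        using gam[of h] gam_u[of _ h] by metis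
      then show "h \<in> {h. coset \<Gamma> h \<in> sec -` E \<inter> space \<mu>} \<longleftrightarrow> h \<in> (\<Union>\<gamma>\<in>\<Gamma>. (\<lambda>h. hmult h \<gamma>) -` (F \<inter> E))"
        using cs by (auto simp: sec_coset)
    qed
    have "(\<Union>\<gamma>\<in>\<Gamma>. (\<lambda>h. hmult h \<gamma>) -` (F \<inter> E)) \<in> sets borel"
      using Fm E C by (intro sets.countable_UN'' borel_rmult_pre) auto
    then show "sec -` E \<inter> space \<mu> \<in> sets \<mu>"
      unfolding st hmanifold_sets_def using eq sp by auto
  qed simp
  then show ?thesis using secp by blast
qed



lemma cl_infinite:
  assumes G: "heis_subgroup \<Gamma>" and C: "countable \<Gamma>" and P: "prob_space \<mu>"
    and sp: "space \<mu> = hmanifold \<Gamma>" and st: "sets \<mu> = hmanifold_sets \<Gamma>"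
    and inv: "\<forall>g. \<forall>A\<in>sets \<mu>. emeasure \<mu> (hact g ` A) = emeasure \<mu> A"
  shows "infinite (cl ` \<Gamma>)"
proof
  assume fin: "finite (cl ` \<Gamma>)"
  interpret prob_space \<mu> by fact
  have "fst ` \<Gamma> = fst ` cl ` \<Gamma>" by (auto simp: cl_def image_image)
  then have ff: "finite (abs ` fst ` \<Gamma>)" using fin by simp
  define R where "R = Max (abs ` fst ` \<Gamma>)"
  have R: "\<bar>fst \<gamma>\<bar> \<le> R" if "\<gamma>\<in>\<Gamma>" for \<gamma> unfolding R_def using ff that by (intro Max_ge) auto
  define S :: "int \<Rightarrow> heis set" where "S n = fst -` {real_of_int n ..< real_of_int n + 1}" for n
  define A where "A n = coset \<Gamma> ` S n" for n
  have preA: "{h. coset \<Gamma> h \<in> A n} = (\<Union>\<gamma>\<in>\<Gamma>. (\<lambda>h. hmult h \<gamma>) -` S n)" for n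
  proof (intro set_eqI)
    fix h
    have "coset \<Gamma> h \<in> A n \<longleftrightarrow> (\<exists>h'\<in>S n. coset \<Gamma> h' = coset \<Gamma> h)" by (auto simp: A_def)
    also have "\<dots> \<longleftrightarrow> (\<exists>\<gamma>\<in>\<Gamma>. hmult h \<gamma> \<in> S n)" unfolding coset_eq_iff[OF G] by blast
    finally show "h \<in> {h. coset \<Gamma> h \<in> A n} \<longleftrightarrow> h \<in> (\<Union>\<gamma>\<in>\<Gamma>. (\<lambda>h. hmult h \<gamma>) -` S n)" by auto
  qed
  have Sb: "S n \<in> sets borel" for n
  proof -
    have "fst \<in> borel_measurable (borel :: heis measure)" by (rule borel_measurable_continuous_onI) (intro continuous_intros)
    then show ?thesis unfolding S_def by (simp add: measurable_def)
  qed
  have Am: "A n \<in> sets \<mu>" for n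
  proof -
    have "(\<Union>\<gamma>\<in>\<Gamma>. (\<lambda>h. hmult h \<gamma>) -` S n) \<in> sets borel"
      using C Sb by (intro sets.countable_UN'' borel_rmult_pre) auto
    moreover have "A n \<subseteq> hmanifold \<Gamma>" by (auto simp: A_def hmanifold_def)
    ultimately show ?thesis unfolding st hmanifold_sets_def using preA by auto
  qed
  have trans: "hact (real_of_int n, 0, 0) ` A 0 = A n" for n
  proof -
    have "hmult (real_of_int n, 0, 0) ` S 0 = S n"
    proof
      show "hmult (real_of_int n, 0, 0) ` S 0 \<subseteq> S n"
        by (auto simp: S_def hmult_alt)
      show "S n \<subseteq> hmult (real_of_int n, 0, 0) ` S 0"
      proof
        fix h assume h: "h \<in> S n"
        obtain x y z where hx: "h = (x,y,z)" by (cases h)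
        have "h = hmult (real_of_int n, 0, 0) (x - n, y, z - n*y)" by (simp add: hx)
        moreover have "(x - n, y, z - n*y) \<in> S 0" using h by (simp add: S_def hx)
        ultimately show "h \<in> hmult (real_of_int n, 0, 0) ` S 0" by blast
      qed
    qed
    then show ?thesis unfolding A_def image_image hact_coset by (metis image_image)
  qed
  have meq: "measure \<mu> (A n) = measure \<mu> (A 0)" for n
    using inv Am trans unfolding measure_def by metis
  define K :: int where "K = \<lceil>2*R\<rceil> + 2"
  have Kpos: "K > 0" and KR: "real_of_int K > R + 1" using R[OF sg(1)[OF G]] unfolding K_def
    by (simp_all, linarith+)
  have disj: "A (K * int j) \<inter> A (K * int j') = {}" if "j \<noteq> j'" for j j'
  proof (rule ccontr)
    assume "A (K * int j) \<inter> A (K * int j') \<noteq> {}"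
    then obtain h1 h2 where h: "h1 \<in> S (K * int j)" "h2 \<in> S (K * int j')" "coset \<Gamma> h1 = coset \<Gamma> h2"
      by (auto simp: A_def)
    then obtain \<delta> where d: "\<delta>\<in>\<Gamma>" "h1 = hmult h2 \<delta>" using coset_eqD[OF G] by blast
    have "fst h1 = fst h2 + fst \<delta>" using d by (simp add: hmult_alt)
    then have "\<bar>fst h1 - fst h2\<bar> \<le> R" using R[OF d(1)] by simp
    then have lt: "\<bar>real_of_int (K * int j) - real_of_int (K * int j')\<bar> < R + 1"
      using h(1,2) by (simp add: S_def) linarith
    have "\<bar>int j - int j'\<bar> \<ge> 1" using that by linarith
    then have "\<bar>K * int j - K * int j'\<bar> \<ge> K" using Kpos
      by (metis abs_mult abs_of_pos mult.right_neutral mult_left_mono right_diff_distrib less_imp_le)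
    then have "real_of_int \<bar>K * int j - K * int j'\<bar> \<ge> real_of_int K" by linarith
    then show False using lt KR by simp
  qed
  have bound: "real N * measure \<mu> (A 0) \<le> 1" for N
  proof -
    have "measure \<mu> (\<Union>j\<in>{..<N}. A (K * int j)) = (\<Sum>j\<in>{..<N}. measure \<mu> (A (K * int j)))"
      using Am disj by (intro finite_measure_finite_Union) (auto simp: disjoint_family_on_def)
    also have "\<dots> = real N * measure \<mu> (A 0)" by (subst sum.cong[OF refl meq]) simp
    finally show ?thesis using prob_le_1 by metis
  qed
  have m0: "measure \<mu> (A 0) = 0"
  proof (rule ccontr)
    assume "measure \<mu> (A 0) \<noteq> 0"
    then have "measure \<mu> (A 0) > 0" using measure_nonneg[of \<mu>] by (simp add: less_le)
    then obtain N where "1 < real N * measure \<mu> (A 0)" using ex_less_of_nat_mult by blast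
    then show False using bound[of N] by simp
  qed
  have null: "A n \<in> null_sets \<mu>" for n
    using Am meq m0 by (simp add: emeasure_eq_measure null_sets_def)
  have "space \<mu> = (\<Union>n\<in>(UNIV::int set). A n)"
  proof
    show "space \<mu> \<subseteq> (\<Union>n. A n)"
    proof
      fix m assume "m \<in> space \<mu>"
      then obtain h where m: "m = coset \<Gamma> h" using sp by (auto simp: hmanifold_def)
      have "h \<in> S \<lfloor>fst h\<rfloor>" by (simp add: S_def)
      then show "m \<in> (\<Union>n. A n)" using m by (auto simp: A_def)
    qed
    show "(\<Union>n. A n) \<subseteq> space \<mu>" using Am sets.sets_into_space by blast
  qed
  then have "space \<mu> \<in> null_sets \<mu>" using null by (metis null_sets_UN)
  then show False using emeasure_space_1 by (simp add: null_sets_def)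
qed



theorem corollary3p6:
  fixes \<Gamma> :: "heis set" and \<mu> :: "heis set measure"
  assumes "heis_lattice \<Gamma>"
    and "prob_space \<mu>"
    and "space \<mu> = hmanifold \<Gamma>"
    and "sets \<mu> = hmanifold_sets \<Gamma>"
    and "\<forall>g. \<forall>A\<in>sets \<mu>. emeasure \<mu> (hact g ` A) = emeasure \<mu> A"
  shows "AE p in \<mu> \<Otimes>\<^sub>M \<mu>. \<not> blockable \<Gamma> (fst p) (snd p)"
proof -
  note P = assms(2) and sp = assms(3) and st = assms(4) and inv = assms(5)
  interpret prob_space \<mu> by fact
  have G: "heis_subgroup \<Gamma>" and D: "heis_discrete \<Gamma>" using assms(1) by (auto simp: heis_lattice_def)
  obtain F where F: "F \<in> sets lborel" "\<forall>h. \<exists>!\<gamma>. \<gamma> \<in> \<Gamma> \<and> hmult h \<gamma> \<in> F"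
    using assms(1) by (auto simp: heis_lattice_def)
  have C: "countable \<Gamma>" using discrete_countable[OF D] .
  obtain sec where sec: "sec \<in> borel_measurable \<mu>" and secp: "\<And>m. m\<in>space \<mu> \<Longrightarrow> coset \<Gamma> (sec m) = m"
    using section_exists[OF G C F(1) F(2) st sp] by blast
  have inf: "infinite (cl ` \<Gamma>)" using cl_infinite[OF G C P sp st inv] .
  have "Gbad \<Gamma> \<in> null_sets lebesgue" using Gbad_negl[OF C] by (simp add: negligible_iff_null_sets)
  then obtain G' where G': "G' \<in> null_sets lborel" "Gbad \<Gamma> \<subseteq> G'"
    unfolding null_sets_completion_iff2 by blast
  have G'b: "G' \<in> sets borel" using G' by auto
  have G'n: "negligible G'" using G' null_sets_completionI by (simp add: negligible_iff_null_sets)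
  define \<psi> where "\<psi> p = hmult (hinv (sec (fst p))) (sec (snd p))" for p :: "heis set \<times> heis set"
  have \<psi>m: "\<psi> \<in> borel_measurable (\<mu> \<Otimes>\<^sub>M \<mu>)"
  proof -
    have m1: "(\<lambda>p::heis\<times>heis. hmult (fst p) (snd p)) \<in> borel_measurable (borel \<Otimes>\<^sub>M borel)"
      unfolding borel_prod by (rule borel_measurable_continuous_onI[OF cont_hmult])
    have m2: "hinv \<in> borel_measurable borel" by (rule borel_measurable_continuous_onI[OF cont_hinv])
    have "(\<lambda>x. (hinv (sec (fst x)), sec (snd x))) \<in> measurable (\<mu> \<Otimes>\<^sub>M \<mu>) (borel \<Otimes>\<^sub>M borel)"
      using sec m2 by measurable
    from measurable_comp[OF this m1] show ?thesis by (simp add: o_def \<psi>_def[abs_def])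
  qed
  define N where "N = {p \<in> space (\<mu> \<Otimes>\<^sub>M \<mu>). \<psi> p \<in> G'}"
  have Nm: "N \<in> sets (\<mu> \<Otimes>\<^sub>M \<mu>)" using \<psi>m G'b unfolding N_def by measurable
  have "emeasure (\<mu> \<Otimes>\<^sub>M \<mu>) N = (\<integral>\<^sup>+m1. emeasure \<mu> (Pair m1 -` N) \<partial>\<mu>)"
    by (rule emeasure_pair_measure_alt[OF Nm])
  also have "\<dots> = (\<integral>\<^sup>+m1. 0 \<partial>\<mu>)"
  proof (intro nn_integral_cong)
    fix m1 assume m1: "m1 \<in> space \<mu>"
    define h1 where "h1 = sec m1"
    define A1 where "A1 = {m2 \<in> space \<mu>. hmult (hinv h1) (sec m2) \<in> G'}"
    have eq: "Pair m1 -` N = A1" using m1 by (auto simp: N_def A1_def \<psi>_def h1_def space_pair_measure)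
    have A1m: "A1 \<in> sets \<mu>"
    proof -
      have "(\<lambda>m2. hmult (hinv h1) (sec m2)) \<in> borel_measurable \<mu>"
        using measurable_comp[OF sec borel_measurable_continuous_onI[OF cont_hmult1(2)]] by (simp add: o_def)
      then show ?thesis using G'b unfolding A1_def by measurable
    qed
    have "{k. coset \<Gamma> k \<in> A1} \<subseteq> (\<Union>\<gamma>\<in>\<Gamma>. (\<lambda>a. hmult (hmult h1 a) (hinv \<gamma>)) ` G')"
    proof
      fix k assume "k \<in> {k. coset \<Gamma> k \<in> A1}"
      then have k: "coset \<Gamma> k \<in> space \<mu>" "hmult (hinv h1) (sec (coset \<Gamma> k)) \<in> G'"
        by (auto simp: A1_def)
      obtain \<gamma> where g: "\<gamma>\<in>\<Gamma>" "sec (coset \<Gamma> k) = hmult k \<gamma>"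
        using coset_eqD[OF G secp[OF k(1)]] by blast
      have "k = hmult (hmult h1 (hmult (hinv h1) (sec (coset \<Gamma> k)))) (hinv \<gamma>)"
        using g by (simp add: hmult_assoc)
      then show "k \<in> (\<Union>\<gamma>\<in>\<Gamma>. (\<lambda>a. hmult (hmult h1 a) (hinv \<gamma>)) ` G')"
        using k(2) g(1) by blast
    qed
    moreover have "negligible (\<Union>\<gamma>\<in>\<Gamma>. (\<lambda>a. hmult (hmult h1 a) (hinv \<gamma>)) ` G')"
      using C by (intro negligible_countable_Union)
        (auto intro!: negligible_differentiable_image_negligible[OF order_refl G'n diff2])
    ultimately have "negligible {k. coset \<Gamma> k \<in> A1}" using negligible_subset by blast
    then have "emeasure \<mu> A1 = 0" using abs_cont[OF G P sp st inv sec secp A1m] by blast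
    then show "emeasure \<mu> (Pair m1 -` N) = 0" using eq by simp
  qed
  also have "\<dots> = 0" by simp
  finally have Nn: "N \<in> null_sets (\<mu> \<Otimes>\<^sub>M \<mu>)" using Nm by auto
  show ?thesis
  proof (rule AE_I'[OF Nn])
    show "{p \<in> space (\<mu> \<Otimes>\<^sub>M \<mu>). \<not> \<not> blockable \<Gamma> (fst p) (snd p)} \<subseteq> N"
    proof
      fix p assume p: "p \<in> {p \<in> space (\<mu> \<Otimes>\<^sub>M \<mu>). \<not> \<not> blockable \<Gamma> (fst p) (snd p)}"
      then have ps: "fst p \<in> space \<mu>" "snd p \<in> space \<mu>" by (auto simp: space_pair_measure)
      have "\<psi> p \<in> G'"
      proof (rule ccontr)
        assume "\<psi> p \<notin> G'"
        then have "\<psi> p \<notin> Gbad \<Gamma>" using G' by auto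
        then have "\<not> blockable \<Gamma> (coset \<Gamma> (sec (fst p))) (coset \<Gamma> (sec (snd p)))"
          using nonblock[OF G inf] unfolding \<psi>_def by blast
        then show False using p secp[OF ps(1)] secp[OF ps(2)] by simp
      qed
      then show "p \<in> N" using p by (simp add: N_def)
    qed
  qed
qed


end
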